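(* Let $n\ge1$ and let $S\subseteq\mathbb{Z}_{2^n}$ with $|S|=2^{n-1}+1$. For every integer $a$ with $1\le a\le n$, $$|C(a+,a,a)|\ge\max\{|S_a|(|S_{a+}|-|L_a|+|S_a|),\;|S_{a+}|(2|S_a|-|L_a|),\;0\}.$$
   Context: Layers: for $1\le i\le n$, $L_i=\{x\in\mathbb{Z}_{2^n}: x\equiv 2^{i-1}\pmod{2^i}\}$, $L_{n+1}=\{0\}$. $S_i=S\cap L_i$ and $S_{i+}=S\cap(L_{i+1}\cup\dots\cup L_{n+1})$. $C(a+,a,a)$ is the set of ordered triples $(x,y,z)$ with $x+y=z$ in $\mathbb{Z}_{2^n}$, $x\in S_{a+}$, $y\in S_a$, $z\in S_a$. *)

theory Defs
  imports Main
begin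

text \<open>Z_{2^n} is represented by the naturals {0..<2^n} with addition modulo 2^n.\<close>

definition layer :: "nat \<Rightarrow> nat \<Rightarrow> nat set" where
  "layer n i = (if i = n + 1 then {0}
                else {x. x < 2^n \<and> x mod 2^i = 2^(i - 1)})"

definition S_layer :: "nat \<Rightarrow> nat set \<Rightarrow> nat \<Rightarrow> nat set" where
  "S_layer n S i = S \<inter> layer n i"

definition S_upper :: "nat \<Rightarrow> nat set \<Rightarrow> nat \<Rightarrow> nat set" where
  "S_upper n S i = S \<inter> (\<Union>j\<in>{i+1..n+1}. layer n j)"

definition C_triples :: "nat \<Rightarrow> nat set \<Rightarrow> nat \<Rightarrow> (nat \<times> nat \<times> nat) set" where
  "C_triples n S a = {(x, y, z). x \<in> S_upper n S a \<and> y \<in> S_layer n S a \<and> z \<in> S_layer n S a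
                                 \<and> (x + y) mod 2^n = z}"

end

theory Submission
  imports Defs
begin

lemma count_lb:
  assumes A: "finite A" and inj: "inj_on f A" and fA: "f ` A \<subseteq> B" and B: "finite B"
    and cB: "card B \<le> card A" and P: "P \<subseteq> A" and Q: "Q \<subseteq> B"
  shows "int (card {x\<in>P. f x \<in> Q}) \<ge> int (card P) + int (card Q) - int (card B)"
proof -
  have cfa: "card (f ` A) = card A" using card_image[OF inj] .
  have eq: "f ` A = B" using card_subset_eq[OF B fA] cfa cB card_mono[OF B fA] by simp
  define R where "R = {x\<in>A. f x \<in> Q}"
  have "f ` R = Q" using eq Q unfolding R_def by auto
  moreover have "inj_on f R" using inj unfolding R_def by (auto intro: inj_on_subset)
  ultimately have cR: "card R = card Q" using card_image by fastforce
  have PR: "{x\<in>P. f x \<in> Q} = P \<inter> R" using P unfolding R_def by auto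
  have fin: "finite P" "finite R" using A P finite_subset unfolding R_def by auto
  have "card (P \<union> R) + card (P \<inter> R) = card P + card R" using card_Un_Int fin by metis
  moreover have "card (P \<union> R) \<le> card A" using A P by (intro card_mono) (auto simp: R_def)
  ultimately show ?thesis using PR cR cfa eq by simp
qed

lemma mod_inj:
  fixes x y y' m :: nat
  assumes "(x + y) mod m = (x + y') mod m" "y < m" "y' < m"
  shows "y = y'"
proof (rule ccontr)
  assume ne: "y \<noteq> y'"
  have key: "\<And>u v. u < v \<Longrightarrow> v < m \<Longrightarrow> (x + u) mod m = (x + v) mod m \<Longrightarrow> False"
  proof -
    fix u v assume uv: "u < v" "v < m" "(x + u) mod m = (x + v) mod m"
    then have "m dvd (x + v) - (x + u)" using mod_eq_dvd_iff_nat[of "x+u" "x+v" m] by simp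
    then have "m dvd v - u" by simp
    moreover have "0 < v - u" "v - u < m" using uv by auto
    ultimately show False using nat_dvd_not_less by blast
  qed
  show False using ne assms key[of y y'] key[of y' y] by (cases "y < y'") auto
qed

theorem claim4p3:
  fixes n a :: nat and S :: "nat set"
  assumes "n \<ge> 1"
    and "S \<subseteq> {..<2^n}"
    and "card S = 2^(n-1) + 1"
    and "1 \<le> a" and "a \<le> n"
  shows "int (card (C_triples n S a)) \<ge>
    max (int (card (S_layer n S a)) * (int (card (S_upper n S a)) - int (card (layer n a)) + int (card (S_layer n S a))))
        (max (int (card (S_upper n S a)) * (2 * int (card (S_layer n S a)) - int (card (layer n a)))) 0)"
proof -
  define N :: nat where "N = 2^n"
  define La where "La = layer n a"
  define U where "U = {x. x < N \<and> 2^a dvd x}"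
  define Sa where "Sa = S_layer n S a"
  define Su where "Su = S_upper n S a"
  define g where "g x y = (x + y) mod N" for x y
  have a1: "a \<noteq> n + 1" using assms by simp
  have La: "La = {x. x < N \<and> x mod 2^a = 2^(a-1)}" using a1 unfolding La_def layer_def N_def by simp
  have dvdN: "(2::nat)^a dvd N" unfolding N_def using assms(5) by (simp add: le_imp_power_dvd)
  have Npos: "N > 0" unfolding N_def by simp
  have SuU: "Su \<subseteq> U"
  proof
    fix x assume "x \<in> Su"
    then obtain j where j: "j \<in> {a+1..n+1}" "x \<in> layer n j" "x \<in> S"
      unfolding Su_def S_upper_def by auto
    show "x \<in> U"
    proof (cases "j = n + 1")
      case True then show ?thesis using j Npos by (simp add: U_def layer_def)
    next
      case False
      then have x: "x < N" "x mod 2^j = 2^(j-1)" using j unfolding layer_def N_def by auto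
      have d1: "(2::nat)^a dvd 2^j" "(2::nat)^a dvd 2^(j-1)" using j by (auto intro: le_imp_power_dvd)
      have "(2::nat)^a dvd x mod 2^j" using x d1 by simp
      then have "(2::nat)^a dvd x" using d1(1) by (metis dvd_mod_iff)
      then show ?thesis using x by (simp add: U_def)
    qed
  qed
  have SaLa: "Sa \<subseteq> La" unfolding Sa_def La_def S_layer_def by auto
  have finLa: "finite La" unfolding La by simp
  have finU: "finite U" unfolding U_def by simp
  have gLa: "g x y \<in> La" if "x \<in> U" "y \<in> La" for x y
  proof -
    have "g x y mod 2^a = (x + y) mod 2^a" unfolding g_def using dvdN by (simp add: mod_mod_cancel)
    also have "\<dots> = (x mod 2^a + y mod 2^a) mod 2^a" by (simp add: mod_add_eq)
    also have "\<dots> = 2^(a-1)" using that unfolding U_def La using assms(4)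
      by (simp add: power_strict_increasing)
    finally show ?thesis unfolding La g_def using Npos by simp
  qed
  have injy: "inj_on (g x) La" for x
    by (rule inj_onI) (auto simp: La g_def dest: mod_inj)
  have injx: "inj_on (\<lambda>x. g x y) U" for y
    by (rule inj_onI) (auto simp: U_def g_def add.commute[of _ y] dest: mod_inj)
  have cLaU: "card La \<le> card U"
  proof -
    have "inj_on (\<lambda>y. y - 2^(a-1)) La"
    proof (rule inj_onI)
      fix u v assume "u \<in> La" "v \<in> La" "u - 2^(a-1) = v - (2::nat)^(a-1)"
      moreover have "u \<ge> 2^(a-1)" using \<open>u \<in> La\<close> mod_less_eq_dividend[of u "2^a"] unfolding La by simp
      moreover have "v \<ge> 2^(a-1)" using \<open>v \<in> La\<close> mod_less_eq_dividend[of v "2^a"] unfolding La by simp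
      ultimately show "u = v" by simp
    qed
    moreover have "(\<lambda>y. y - 2^(a-1)) ` La \<subseteq> U"
    proof
      fix z assume "z \<in> (\<lambda>y. y - 2^(a-1)) ` La"
      then obtain y where y: "y \<in> La" "z = y - 2^(a-1)" by auto
      have "y = 2^a * (y div 2^a) + 2^(a-1)" using y div_mult_mod_eq[of y "2^a"] unfolding La by (simp add: mult.commute)
      then have "z = 2^a * (y div 2^a)" using y by simp
      then show "z \<in> U" using y unfolding La U_def by auto
    qed
    ultimately show ?thesis using card_inj_on_le finU by blast
  qed
  have finSa: "finite Sa" using SaLa finLa finite_subset by blast
  have finSu: "finite Su" using SuU finU finite_subset by blast
  define D where "D = Sigma Su (\<lambda>x. {y\<in>Sa. g x y \<in> Sa})"
  define D' where "D' = Sigma Sa (\<lambda>y. {x\<in>Su. g x y \<in> Sa})"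
  have CD: "C_triples n S a = (\<lambda>(x,y). (x,y,g x y)) ` D"
    unfolding C_triples_def D_def g_def N_def Sa_def Su_def by auto
  have injD: "inj_on (\<lambda>(x,y). (x,y,g x y)) D" by (rule inj_onI) auto
  have DD': "D = (\<lambda>(y,x). (x,y)) ` D'" unfolding D_def D'_def by auto
  have injD': "inj_on (\<lambda>(y,x). (x,y)) D'" by (rule inj_onI) auto
  have c1: "card (C_triples n S a) = (\<Sum>x\<in>Su. card {y\<in>Sa. g x y \<in> Sa})"
    using CD card_image[OF injD] unfolding D_def using finSu finSa by (simp add: card_SigmaI)
  have c2: "card (C_triples n S a) = (\<Sum>y\<in>Sa. card {x\<in>Su. g x y \<in> Sa})"
    using CD card_image[OF injD] DD' card_image[OF injD'] unfolding D'_def using finSu finSa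
    by (simp add: card_SigmaI)
  have b1: "int (card {y\<in>Sa. g x y \<in> Sa}) \<ge> 2 * int (card Sa) - int (card La)" if "x \<in> Su" for x
    using count_lb[OF finLa injy[of x] _ finLa _ SaLa SaLa] gLa that SuU by auto
  have b2: "int (card {x\<in>Su. g x y \<in> Sa}) \<ge> int (card Su) + int (card Sa) - int (card La)" if "y \<in> Sa" for y
    using count_lb[OF finU injx[of y] _ finLa cLaU SuU SaLa] gLa that SaLa by auto
  have r1: "int (card (C_triples n S a)) \<ge> int (card Su) * (2 * int (card Sa) - int (card La))"
  proof -
    have "int (card (C_triples n S a)) = (\<Sum>x\<in>Su. int (card {y\<in>Sa. g x y \<in> Sa}))"
      using c1 by simp
    also have "\<dots> \<ge> (\<Sum>x\<in>Su. 2 * int (card Sa) - int (card La))" using b1 by (rule sum_mono)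
    finally show ?thesis by simp
  qed
  have r2: "int (card (C_triples n S a)) \<ge> int (card Sa) * (int (card Su) - int (card La) + int (card Sa))"
  proof -
    have "int (card (C_triples n S a)) = (\<Sum>y\<in>Sa. int (card {x\<in>Su. g x y \<in> Sa}))"
      using c2 by simp
    also have "\<dots> \<ge> (\<Sum>y\<in>Sa. int (card Su) + int (card Sa) - int (card La))" using b2 by (rule sum_mono)
    finally show ?thesis by (simp add: algebra_simps)
  qed
  show ?thesis using r1 r2 unfolding Sa_def Su_def La_def by simp
qed

end
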